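(* Let $G$ be a graph, $\ell$ a non-negative integer, and let $G'$ be the graph constructed from $G$ as described in the context. If $(G,\ell)$ is a Yes-instance of \textsc{Edge Induced Forest}, then $(G',4\ell,3\ell)$ is a Yes-instance of \textsc{Contraction(vc)}.
   Context: All graphs are finite, simple and undirected. Construction of $G'$ from $G$: for every vertex $u\in V(G)$ add two vertices $z_u,p_u$ and the edge $z_up_u$. For every edge $uv\in E(G)$ add seven vertices $y^a_{uv},y^b_{uv},y^c_{uv},w^1_{uv},w^2_{uv},p^1_{uv},p^2_{uv}$ and the edges $z_uy^c_{uv}$, $z_vy^c_{uv}$, $y^a_{uv}y^b_{uv}$, $y^a_{uv}y^c_{uv}$, $y^b_{uv}w^1_{uv}$, $y^b_{uv}w^2_{uv}$, $w^1_{uv}p^1_{uv}$, $w^2_{uv}p^2_{uv}$. No other vertices or edges. \textsc{Edge Induced Forest}: given $(G,\ell)$, decide whether there is a set $F$ of at least $\ell$ edges with $G[V(F)]$ a forest, where $V(F)$ is the set of endpoints of $F$. $\mathrm{vc}(H)$ is the minimum size of a vertex cover of $H$; $H/F$ denotes the graph obtained by contracting the edges of $F$ (contracting $uv$ deletes $u,v$ and adds a new vertex adjacent to $(N(u)\cup N(v))\setminus\{u,v\}$, without loops or parallel edges). $(H,k,d)$ is a Yes-instance of \textsc{Contraction(vc)} iff there exists $F\subseteq E(H)$ with $|F|\le k$ and $\mathrm{vc}(H/F)\le\mathrm{vc}(H)-d$. *)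

theory Defs
  imports Main
begin

definition graph :: "'a set \<Rightarrow> 'a set set \<Rightarrow> bool" where
  "graph V E \<longleftrightarrow> finite V \<and> (\<forall>e\<in>E. \<exists>u v. e = {u, v} \<and> u \<noteq> v \<and> u \<in> V \<and> v \<in> V)"

definition is_cycle :: "'a set set \<Rightarrow> 'a list \<Rightarrow> bool" where
  "is_cycle E vs \<longleftrightarrow> length vs \<ge> 3 \<and> distinct vs \<and>
     (\<forall>i < length vs. {vs ! i, vs ! ((i + 1) mod length vs)} \<in> E)"

definition forest :: "'a set \<Rightarrow> 'a set set \<Rightarrow> bool" where
  "forest V E \<longleftrightarrow> \<not> (\<exists>vs. set vs \<subseteq> V \<and> is_cycle E vs)"

definition induced_edges :: "'a set set \<Rightarrow> 'a set \<Rightarrow> 'a set set" where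
  "induced_edges E S = {e \<in> E. e \<subseteq> S}"

definition edge_induced_forest :: "'a set \<Rightarrow> 'a set set \<Rightarrow> nat \<Rightarrow> bool" where
  "edge_induced_forest V E l \<longleftrightarrow>
     (\<exists>F \<subseteq> E. card F \<ge> l \<and> forest (\<Union>F) (induced_edges E (\<Union>F)))"

definition vertex_cover :: "'a set \<Rightarrow> 'a set set \<Rightarrow> 'a set \<Rightarrow> bool" where
  "vertex_cover V E C \<longleftrightarrow> C \<subseteq> V \<and> (\<forall>e\<in>E. e \<inter> C \<noteq> {})"

definition vc :: "'a set \<Rightarrow> 'a set set \<Rightarrow> nat" where
  "vc V E = Min {card C | C. vertex_cover V E C}"

text \<open>Contraction of an edge set F: vertices of H/F are the connected components
  of the spanning subgraph (V, F); two components are adjacent iff some edge of H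
  joins them (no loops, no parallel edges).\<close>
definition ccomp :: "'a set set \<Rightarrow> 'a \<Rightarrow> 'a set" where
  "ccomp F x = {y. (x, y) \<in> {(a, b). {a, b} \<in> F}\<^sup>*}"

definition contract_V :: "'a set \<Rightarrow> 'a set set \<Rightarrow> 'a set set" where
  "contract_V V F = ccomp F ` V"

definition contract_E :: "'a set set \<Rightarrow> 'a set set \<Rightarrow> 'a set set set" where
  "contract_E E F = {{ccomp F x, ccomp F y} | x y. {x, y} \<in> E \<and> ccomp F x \<noteq> ccomp F y}"

definition contraction_vc :: "'a set \<Rightarrow> 'a set set \<Rightarrow> nat \<Rightarrow> nat \<Rightarrow> bool" where
  "contraction_vc V E k d \<longleftrightarrow>
     (\<exists>F \<subseteq> E. card F \<le> k \<and>
        int (vc (contract_V V F) (contract_E E F)) \<le> int (vc V E) - int d)"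

datatype 'a node = Zv 'a | Pv 'a
  | Ya "'a set" | Yb "'a set" | Yc "'a set"
  | W1 "'a set" | W2 "'a set" | P1 "'a set" | P2 "'a set"

definition constr_V :: "'a set \<Rightarrow> 'a set set \<Rightarrow> 'a node set" where
  "constr_V V E = Zv ` V \<union> Pv ` V \<union>
     (\<Union>e\<in>E. {Ya e, Yb e, Yc e, W1 e, W2 e, P1 e, P2 e})"

definition constr_E :: "'a set \<Rightarrow> 'a set set \<Rightarrow> 'a node set set" where
  "constr_E V E = {{Zv u, Pv u} | u. u \<in> V} \<union>
     (\<Union>e\<in>E. {{Zv u, Yc e} | u. u \<in> e} \<union>
        {{Ya e, Yb e}, {Ya e, Yc e}, {Yb e, W1 e}, {Yb e, W2 e}, {W1 e, P1 e}, {W2 e, P2 e}})"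

end

theory Submission imports Defs "HOL-Library.Transitive_Closure_Table" begin

definition rel :: "'a set set \<Rightarrow> ('a \<times> 'a) set" where
  "rel F = {(a, b). {a, b} \<in> F}"

lemma ccomp_rel: "ccomp F x = {y. (x, y) \<in> (rel F)\<^sup>*}"
  by (simp add: ccomp_def rel_def)

lemma path_cycle:
  assumes "(u,v) \<in> (rel F0)\<^sup>*" "u \<noteq> v" "{u,v} \<notin> F0"
  shows "\<exists>vs. is_cycle (insert {u,v} F0) vs \<and> set vs \<subseteq> insert u (\<Union>F0)"
proof -
  let ?p = "\<lambda>a b. {a,b} \<in> F0"
  have "?p\<^sup>*\<^sup>* u v" using assms(1) by (simp add: rel_def rtranclp_rtrancl_eq)
  then obtain xs0 where "rtrancl_path ?p u xs0 v" by (auto simp: rtranclp_eq_rtrancl_path)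
  then obtain xs where P: "rtrancl_path ?p u xs v" and D: "distinct (u # xs)"
    by (rule rtrancl_path_distinct)
  have ne: "xs \<noteq> []" using P assms(2) by (cases rule: rtrancl_path.cases) auto
  have lst: "last xs = v" using rtrancl_path_last[OF P ne] .
  have ed: "\<And>i. i < length xs \<Longrightarrow> {(u#xs)!i, xs!i} \<in> F0"
    using rtrancl_path_nth[OF P] by blast
  have len: "length xs \<ge> 2"
  proof (rule ccontr)
    assume "\<not> length xs \<ge> 2"
    with ne have "length xs = 1" by (cases xs) (auto simp: Suc_le_eq)
    then obtain a where "xs = [a]" by (metis One_nat_def length_0_conv length_Suc_conv)
    then have "xs = [v]" using lst by simp
    then show False using ed[of 0] assms(3) by simp
  qed
  define vs where "vs = u # xs"
  have "is_cycle (insert {u,v} F0) vs"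
    unfolding is_cycle_def
  proof (intro conjI allI impI)
    show "length vs \<ge> 3" using len by (simp add: vs_def)
    show "distinct vs" using D by (simp add: vs_def)
    fix i assume i: "i < length vs"
    show "{vs ! i, vs ! ((i + 1) mod length vs)} \<in> insert {u, v} F0"
    proof (cases "i < length xs")
      case True
      then have "(i+1) mod length vs = i + 1" by (simp add: vs_def)
      then show ?thesis using ed[OF True] by (simp add: vs_def)
    next
      case False
      then have ii: "i = length xs" using i by (simp add: vs_def)
      then have "(i+1) mod length vs = 0" by (simp add: vs_def)
      moreover have "vs ! i = v" using ii lst ne by (simp add: vs_def last_conv_nth)
      ultimately show ?thesis by (simp add: vs_def insert_commute)
    qed
  qed
  moreover have "set vs \<subseteq> insert u (\<Union>F0)"
  proof
    fix x assume "x \<in> set vs"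
    then have "x = u \<or> x \<in> set xs" by (simp add: vs_def)
    then show "x \<in> insert u (\<Union>F0)"
    proof
      assume "x \<in> set xs"
      then obtain i where "i < length xs" "x = xs ! i" by (auto simp: in_set_conv_nth)
      then show ?thesis using ed[of i] by blast
    qed simp
  qed
  ultimately show ?thesis by blast
qed

lemma sym_rel: "sym (rel F)"
  by (auto simp: sym_def rel_def insert_commute)

lemma rel_sym_star: "(x,y) \<in> (rel F)\<^sup>* \<Longrightarrow> (y,x) \<in> (rel F)\<^sup>*"
  by (meson sym_rel sym_rtrancl symD)

lemma ccomp_eq: "ccomp F x = ccomp F y \<longleftrightarrow> (x,y) \<in> (rel F)\<^sup>*"
proof
  assume "ccomp F x = ccomp F y"
  moreover have "y \<in> ccomp F y" by (simp add: ccomp_rel)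
  ultimately have "y \<in> ccomp F x" by simp
  then show "(x,y) \<in> (rel F)\<^sup>*" by (simp add: ccomp_rel)
next
  assume a: "(x,y) \<in> (rel F)\<^sup>*"
  show "ccomp F x = ccomp F y"
    unfolding ccomp_rel using a rel_sym_star[OF a]
    by (auto intro: rtrancl_trans)
qed

lemma rel_mono: "F \<subseteq> G \<Longrightarrow> (rel F)\<^sup>* \<subseteq> (rel G)\<^sup>*"
  by (rule rtrancl_mono) (auto simp: rel_def)

lemma ccomp_fresh: assumes "x \<notin> \<Union>F" shows "ccomp F x = {x}"
proof -
  have "(x,y) \<in> (rel F)\<^sup>* \<Longrightarrow> y = x" for y
  proof (erule converse_rtranclE)
    fix z assume "(x,z) \<in> rel F"
    then have "{x,z} \<in> F" by (simp add: rel_def)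
    then show "y = x" using assms by blast
  qed simp
  then show ?thesis by (auto simp: ccomp_rel)
qed

lemma ccomp_self: "x \<in> ccomp F x"
  by (simp add: ccomp_rel)

lemma merge_card:
  assumes "finite X" "x \<in> X" "y \<in> X" "ccomp F x \<noteq> ccomp F y"
  shows "card (ccomp (insert {x,y} F) ` X) + 1 \<le> card (ccomp F ` X)"
proof -
  define G where "G = insert {x,y} F"
  define h where "h C = ccomp G (SOME z. z \<in> C)" for C
  have hz: "h (ccomp F z) = ccomp G z" for z
  proof -
    have "\<exists>w. w \<in> ccomp F z" using ccomp_self[of z F] by blast
    then have "(SOME w. w \<in> ccomp F z) \<in> ccomp F z" by (rule someI_ex)
    then have "(z, SOME w. w \<in> ccomp F z) \<in> (rel G)\<^sup>*"
      using rel_mono[of F G] by (auto simp: ccomp_rel G_def)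
    then show ?thesis unfolding h_def using ccomp_eq by metis
  qed
  have xy: "ccomp G x = ccomp G y"
    unfolding ccomp_eq by (rule r_into_rtrancl) (simp add: rel_def G_def)
  define K where "K = ccomp F ` X"
  have "ccomp G ` X = h ` K" unfolding K_def image_image hz ..
  also have "\<dots> = h ` (K - {ccomp F y})"
  proof
    show "h ` K \<subseteq> h ` (K - {ccomp F y})"
    proof
      fix c assume "c \<in> h ` K"
      then obtain C where C: "C \<in> K" "c = h C" by blast
      show "c \<in> h ` (K - {ccomp F y})"
      proof (cases "C = ccomp F y")
        case True
        then have "c = h (ccomp F x)" using C hz xy by simp
        moreover have "ccomp F x \<in> K - {ccomp F y}" using assms K_def by auto
        ultimately show ?thesis by blast
      qed (use C in auto)
    qed
  qed auto
  finally have "card (ccomp G ` X) \<le> card (K - {ccomp F y})"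
    by (simp add: card_image_le K_def assms(1))
  moreover have "card (K - {ccomp F y}) + 1 = card K"
  proof -
    have "ccomp F y \<in> K" "finite K" using assms K_def by auto
    then show ?thesis using card_Suc_Diff1 by fastforce
  qed
  ultimately show ?thesis unfolding G_def K_def by linarith
qed

definition gad :: "'a set \<Rightarrow> 'a node set set" where
  "gad e = {{Yb e, W1 e}, {Yb e, W2 e}} \<union> (\<lambda>w. {Zv w, Yc e}) ` e"

definition TT :: "'a set set \<Rightarrow> 'a node set set" where
  "TT F0 = (\<Union>e\<in>F0. gad e)"

lemma proj_star:
  assumes "\<And>a b. (a,b) \<in> r \<Longrightarrow> (f a, f b) \<in> s\<^sup>*" "(x,y) \<in> r\<^sup>*"
  shows "(f x, f y) \<in> s\<^sup>*"
  using assms(2)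
proof (induction rule: rtrancl_induct)
  case (step y z)
  then show ?case using assms(1) by (meson rtrancl_trans)
qed simp

lemma fresh_ne: "b \<notin> \<Union>F \<Longrightarrow> a \<noteq> b \<Longrightarrow> ccomp F a \<noteq> ccomp F b"
  using ccomp_fresh[of b F] ccomp_self[of a F] by auto

lemma un_TT: "x \<in> \<Union>(TT F0) \<Longrightarrow> \<exists>e'\<in>F0. x \<in> {Yb e', W1 e', W2 e', Yc e'} \<or> (\<exists>w. x = Zv w)"
  by (auto simp: TT_def gad_def)

lemma count_step:
  assumes E2: "\<forall>e\<in>E. \<exists>u v. e = {u, v} \<and> u \<noteq> v"
    and F0E: "F0 \<subseteq> E" and eE: "e \<in> E" and eF0: "e \<notin> F0"
    and noc: "\<And>u v. e = {u,v} \<Longrightarrow> u \<noteq> v \<Longrightarrow> (u,v) \<notin> (rel F0)\<^sup>*"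
    and fD: "finite D" and inD: "Yb e \<in> D" "W1 e \<in> D" "W2 e \<in> D" "Yc e \<in> D" "\<And>w. w \<in> e \<Longrightarrow> Zv w \<in> D"
  shows "card (ccomp (TT (insert e F0)) ` D) + 4 \<le> card (ccomp (TT F0) ` D)"
proof -
  obtain u v where e: "e = {u,v}" "u \<noteq> v" using E2 eE by blast
  define T0 where "T0 = TT F0"
  define T1 where "T1 = insert {Yb e, W1 e} T0"
  define T2 where "T2 = insert {Yb e, W2 e} T1"
  define T3 where "T3 = insert {Zv u, Yc e} T2"
  define T4 where "T4 = insert {Zv v, Yc e} T3"
  have T4eq: "TT (insert e F0) = T4"
    unfolding T4_def T3_def T2_def T1_def T0_def TT_def gad_def using e by auto
  have f1: "W1 e \<notin> \<Union>T0" using eF0 un_TT[of "W1 e" F0] unfolding T0_def by auto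
  have f2: "W2 e \<notin> \<Union>T1" using eF0 un_TT[of "W2 e" F0] unfolding T1_def T0_def by auto
  have f3: "Yc e \<notin> \<Union>T2" using eF0 un_TT[of "Yc e" F0] unfolding T2_def T1_def T0_def by auto
  have c1: "card (ccomp T1 ` D) + 1 \<le> card (ccomp T0 ` D)"
    unfolding T1_def by (rule merge_card[OF fD inD(1) inD(2)]) (rule fresh_ne[OF f1], simp)
  have c2: "card (ccomp T2 ` D) + 1 \<le> card (ccomp T1 ` D)"
    unfolding T2_def by (rule merge_card[OF fD inD(1) inD(3)]) (rule fresh_ne[OF f2], simp)
  have c3: "card (ccomp T3 ` D) + 1 \<le> card (ccomp T2 ` D)"
    unfolding T3_def by (rule merge_card[OF fD _ inD(4)]) (use inD(5) e in simp, rule fresh_ne[OF f3], simp)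
  have ne4: "ccomp T3 (Zv v) \<noteq> ccomp T3 (Yc e)"
  proof
    assume "ccomp T3 (Zv v) = ccomp T3 (Yc e)"
    then have st: "(Zv v, Yc e) \<in> (rel T3)\<^sup>*" by (simp add: ccomp_eq)
    define pi :: "'a node \<Rightarrow> 'a" where
      "pi n = (case n of Zv w \<Rightarrow> w | Yc x \<Rightarrow> (if x = e then u else (SOME w. w \<in> x)) | _ \<Rightarrow> u)" for n
    have edge: "(pi a, pi b) \<in> (rel F0)\<^sup>*" if ab: "(a,b) \<in> rel T3" for a b
    proof -
      have abT: "{a,b} \<in> T3" using ab by (simp add: rel_def)
      have key: "(pi a, pi b) \<in> (rel F0)\<^sup>*" if th: "{a,b} = {Zv w, Yc e'}" "e' \<in> F0" "w \<in> e'" for w e'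
      proof -
        have "e' \<noteq> e" using th eF0 by auto
        obtain p q where pq: "e' = {p,q}" "p \<noteq> q" using E2 F0E th(2) by blast
        have sm: "(SOME w. w \<in> e') \<in> e'" using pq by (metis insertI1 someI_ex)
        let ?s = "SOME w. w \<in> e'"
        have "(w, ?s) \<in> (rel F0)\<^sup>*"
        proof (cases "w = ?s")
          case False
          then have "{w, ?s} = e'" using sm th(3) pq by auto
          then have "(w, ?s) \<in> rel F0" using th(2) by (simp add: rel_def)
          then show ?thesis by blast
        qed simp
        moreover have "pi (Yc e') = ?s" using \<open>e' \<noteq> e\<close> by (simp add: pi_def)
        moreover have "pi (Zv w) = w" by (simp add: pi_def)
        moreover have "(a = Zv w \<and> b = Yc e') \<or> (a = Yc e' \<and> b = Zv w)"
          using th(1) by (auto simp: doubleton_eq_iff)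
        ultimately show ?thesis using rel_sym_star by metis
      qed
      show ?thesis
      proof (cases "{a,b} \<in> T0")
        case True
        then obtain e' where e': "e' \<in> F0" "{a,b} \<in> gad e'" unfolding T0_def TT_def by blast
        show ?thesis
        proof (cases "{a,b} \<in> {{Yb e', W1 e'}, {Yb e', W2 e'}}")
          case True
          then show ?thesis by (auto simp: doubleton_eq_iff pi_def)
        next
          case False
          then obtain w where "w \<in> e'" "{a,b} = {Zv w, Yc e'}" using e' by (auto simp: gad_def)
          then show ?thesis using key e' by blast
        qed
      next
        case False
        then have "{a,b} \<in> {{Yb e, W1 e}, {Yb e, W2 e}, {Zv u, Yc e}}"
          using abT unfolding T3_def T2_def T1_def by auto
        then show ?thesis by (auto simp: doubleton_eq_iff pi_def)
      qed
    qed
    have "(pi (Zv v), pi (Yc e)) \<in> (rel F0)\<^sup>*" by (rule proj_star[OF edge st])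
    then have "(v, u) \<in> (rel F0)\<^sup>*" by (simp add: pi_def)
    then have "(u, v) \<in> (rel F0)\<^sup>*" by (rule rel_sym_star)
    then show False using noc e by blast
  qed
  have c4: "card (ccomp T4 ` D) + 1 \<le> card (ccomp T3 ` D)"
    unfolding T4_def by (rule merge_card[OF fD _ inD(4) ne4]) (use inD(5) e in simp)
  show ?thesis unfolding T4eq T0_def[symmetric] using c1 c2 c3 c4 by linarith
qed

lemma count_all:
  assumes E2: "\<forall>e\<in>E. \<exists>u v. e = {u, v} \<and> u \<noteq> v"
    and FE: "F \<subseteq> E" and fF: "finite F"
    and noc: "\<And>F0 e u v. F0 \<subseteq> F \<Longrightarrow> e \<in> F \<Longrightarrow> e \<notin> F0 \<Longrightarrow> e = {u,v} \<Longrightarrow> u \<noteq> v \<Longrightarrow> (u,v) \<notin> (rel F0)\<^sup>*"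
    and fD: "finite D"
    and inD: "\<And>e. e \<in> F \<Longrightarrow> Yb e \<in> D \<and> W1 e \<in> D \<and> W2 e \<in> D \<and> Yc e \<in> D \<and> (\<forall>w\<in>e. Zv w \<in> D)"
  shows "card (ccomp (TT F) ` D) + 4 * card F \<le> card D"
proof -
  have "F0 \<subseteq> F \<Longrightarrow> card (ccomp (TT F0) ` D) + 4 * card F0 \<le> card D" for F0
  proof (induction F0 rule: infinite_finite_induct)
    case (infinite A) then show ?case using fF finite_subset by blast
  next
    case empty
    have h: "ccomp (TT {}) x = {x}" for x by (rule ccomp_fresh) (simp add: TT_def)
    have "ccomp (TT {}) ` D = (\<lambda>x. {x}) ` D" by (rule image_cong[OF refl]) (rule h)
    moreover have "card ((\<lambda>x. {x}) ` D) = card D" by (rule card_image) (simp add: inj_on_def)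
    ultimately show ?case by simp
  next
    case (insert e F0)
    have st: "card (ccomp (TT (insert e F0)) ` D) + 4 \<le> card (ccomp (TT F0) ` D)"
      apply (rule count_step[OF E2])
      using insert.prems insert.hyps FE inD[of e] noc[of F0 e] fD by auto
    have "card (insert e F0) = card F0 + 1" using insert.hyps by simp
    then show ?case using st insert.IH insert.prems by simp
  qed
  then show ?thesis by simp
qed

lemma vc_le:
  assumes "finite V" "vertex_cover V E C"
  shows "vc V E \<le> card C"
proof -
  have "{card C | C. vertex_cover V E C} \<subseteq> card ` Pow V" by (auto simp: vertex_cover_def)
  then have "finite {card C | C. vertex_cover V E C}" using assms(1) finite_subset by blast
  then show ?thesis unfolding vc_def using assms(2) by (auto intro: Min_le)
qed

lemma vc_ge:
  assumes "finite V" "vertex_cover V E C1" "\<And>C. vertex_cover V E C \<Longrightarrow> k \<le> card C"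
  shows "k \<le> vc V E"
proof -
  have "{card C | C. vertex_cover V E C} \<subseteq> card ` Pow V" by (auto simp: vertex_cover_def)
  then have fin: "finite {card C | C. vertex_cover V E C}" using assms(1) finite_subset by blast
  have "vc V E \<in> {card C | C. vertex_cover V E C}" unfolding vc_def
    by (rule Min_in[OF fin]) (use assms(2) in blast)
  then show ?thesis using assms(3) by auto
qed


theorem lemma7:
  fixes V :: "'a set" and E :: "'a set set" and l :: nat
  assumes "graph V E"
    and "edge_induced_forest V E l"
  shows "contraction_vc (constr_V V E) (constr_E V E) (4 * l) (3 * l)"
proof -
  have fV: "finite V" and Eg: "\<forall>e\<in>E. \<exists>u v. e = {u, v} \<and> u \<noteq> v \<and> u \<in> V \<and> v \<in> V"
    using assms(1) unfolding graph_def by auto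
  have E2: "\<forall>e\<in>E. \<exists>u v. e = {u, v} \<and> u \<noteq> v" using Eg by meson
  have EV: "w \<in> V" if ew: "e \<in> E" "w \<in> e" for e w
  proof -
    obtain u v where "e = {u,v}" "u \<in> V" "v \<in> V" using Eg ew(1) by blast
    then show ?thesis using ew(2) by auto
  qed
  have "E \<subseteq> Pow V" using EV by auto
  then have fE: "finite E" using fV by (meson finite_Pow_iff rev_finite_subset)
  obtain F1 where F1: "F1 \<subseteq> E" "card F1 \<ge> l" "forest (\<Union>F1) (induced_edges E (\<Union>F1))"
    using assms(2) by (auto simp: edge_induced_forest_def)
  have fF1: "finite F1" using F1(1) fE by (rule finite_subset)
  obtain F where F: "F \<subseteq> F1" "card F = l" using obtain_subset_with_card_n[OF F1(2)] by blast
  have FE: "F \<subseteq> E" using F F1 by blast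
  have fF: "finite F" using F(1) fF1 by (rule finite_subset)
  have noc: "(u,v) \<notin> (rel F0)\<^sup>*"
    if "F0 \<subseteq> F" "e \<in> F" "e \<notin> F0" "e = {u,v}" "u \<noteq> v" for F0 e u v
  proof
    assume "(u,v) \<in> (rel F0)\<^sup>*"
    moreover have "{u,v} \<notin> F0" using that(3,4) by simp
    ultimately obtain vs where
      vs: "is_cycle (insert {u,v} F0) vs" "set vs \<subseteq> insert u (\<Union>F0)" 
      using path_cycle[OF _ \<open>u \<noteq> v\<close>] by blast
    have sub: "insert {u,v} F0 \<subseteq> induced_edges E (\<Union>F1)"
      using that F F1 by (auto simp: induced_edges_def)
    have "is_cycle (induced_edges E (\<Union>F1)) vs"
      using vs(1) sub by (auto simp: is_cycle_def)
    moreover have "set vs \<subseteq> \<Union>F1"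
    proof -
      have "u \<in> \<Union>F1" using that(2,4) F(1) by blast
      moreover have "\<Union>F0 \<subseteq> \<Union>F1" using that(1) F(1) by blast
      ultimately show ?thesis using vs(2) by blast
    qed
    ultimately show False using F1(3) by (auto simp: forest_def)
  qed
  define V' where "V' = constr_V V E"
  define E' where "E' = constr_E V E"
  define A where "A = Zv ` V \<union> W1 ` E \<union> W2 ` E \<union> Ya ` (E - F)"
  define D where "D = A \<union> (Yc ` F \<union> Yb ` F)"
  define C0 where "C0 = A \<union> Ya ` F"
  have fA: "finite A" using fV fE by (simp add: A_def)
  have iYc: "card (Yc ` F) = l" using F(2) card_image[of Yc F] by (simp add: inj_on_def)
  have iYb: "card (Yb ` F) = l" using F(2) card_image[of Yb F] by (simp add: inj_on_def)
  have iYa: "card (Ya ` F) = l" using F(2) card_image[of Ya F] by (simp add: inj_on_def)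
  have d1: "Yc ` F \<inter> Yb ` F = {}" by blast
  have d2: "A \<inter> (Yc ` F \<union> Yb ` F) = {}" unfolding A_def by blast
  have d3: "A \<inter> Ya ` F = {}" unfolding A_def by blast
  have cD: "card D = card A + 2 * l"
    unfolding D_def using card_Un_disjoint[OF fA _ d2] card_Un_disjoint[OF _ _ d1] fF iYc iYb by simp
  have cC0: "card C0 = card A + l"
    unfolding C0_def using card_Un_disjoint[OF fA _ d3] fF iYa by simp
  have fV': "finite V'" using fV fE by (simp add: V'_def constr_V_def)
  have DV': "D \<subseteq> V'" using FE by (auto simp: D_def A_def V'_def constr_V_def)
  have coverD: "vertex_cover V' E' D"
    unfolding vertex_cover_def
  proof (intro conjI ballI DV')
    fix x assume "x \<in> E'"
    then consider (a) w where "w \<in> V" "x = {Zv w, Pv w}"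
      | (b) e w where "e \<in> E" "w \<in> e" "x = {Zv w, Yc e}"
      | (c) e where "e \<in> E" "x \<in> {{Ya e, Yb e}, {Ya e, Yc e}, {Yb e, W1 e}, {Yb e, W2 e}, {W1 e, P1 e}, {W2 e, P2 e}}"
    proof -
      have "x \<in> {{Zv u, Pv u} | u. u \<in> V} \<union>
         (\<Union>e\<in>E. {{Zv u, Yc e} | u. u \<in> e} \<union>
        {{Ya e, Yb e}, {Ya e, Yc e}, {Yb e, W1 e}, {Yb e, W2 e}, {W1 e, P1 e}, {W2 e, P2 e}})"
        using \<open>x \<in> E'\<close> unfolding E'_def constr_E_def .
      then show ?thesis
      proof (elim UnE UN_E)
        assume "x \<in> {{Zv u, Pv u} | u. u \<in> V}"
        then obtain u where "u \<in> V" "x = {Zv u, Pv u}" by blast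
        then show ?thesis by (rule that(1))
      next
        fix e assume "e \<in> E" "x \<in> {{Zv u, Yc e} | u. u \<in> e}"
        then obtain u where "u \<in> e" "x = {Zv u, Yc e}" by blast
        then show ?thesis using that(2) \<open>e \<in> E\<close> by blast
      next
        fix e assume "e \<in> E" "x \<in> {{Ya e, Yb e}, {Ya e, Yc e}, {Yb e, W1 e}, {Yb e, W2 e}, {W1 e, P1 e}, {W2 e, P2 e}}"
        then show ?thesis by (rule that(3))
      qed
    qed
    then show "x \<inter> D \<noteq> {}"
    proof cases
      case a
      have "Zv w \<in> D" using a(1) unfolding D_def A_def by blast
      then show ?thesis using a(2) by auto
    next
      case b
      have "Zv w \<in> D" using EV[OF b(1,2)] unfolding D_def A_def by blast
      then show ?thesis using b(3) by auto
    next
      case c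
      have m1: "W1 e \<in> D" "W2 e \<in> D" using c(1) unfolding D_def A_def by blast+
      have m2: "e \<in> F \<Longrightarrow> Yb e \<in> D" "e \<in> F \<Longrightarrow> Yc e \<in> D" unfolding D_def by blast+
      have m3: "e \<notin> F \<Longrightarrow> Ya e \<in> D" using c(1) unfolding D_def A_def by blast
      have "x = {Ya e, Yb e} \<or> x = {Ya e, Yc e} \<or> x = {Yb e, W1 e} \<or> x = {Yb e, W2 e} \<or> x = {W1 e, P1 e} \<or> x = {W2 e, P2 e}"
        using c(2) by simp
      then show ?thesis
      proof (elim disjE)
        assume "x = {Ya e, Yb e}" then show ?thesis using m2 m3 by (cases "e \<in> F") auto
      next
        assume "x = {Ya e, Yc e}" then show ?thesis using m2 m3 by (cases "e \<in> F") auto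
      qed (use m1 in auto)
    qed
  qed
  have fD: "finite D" using DV' fV' finite_subset by blast
  define F' where "F' = TT F"
  have F'E': "F' \<subseteq> E'"
  proof
    fix x assume "x \<in> F'"
    then obtain e where e: "e \<in> F" "x \<in> gad e" unfolding F'_def TT_def by (rule UN_E)
    have eE: "e \<in> E" using FE e(1) by (rule subsetD)
    have "x \<in> {{Zv u, Yc e} | u. u \<in> e} \<union>
        {{Ya e, Yb e}, {Ya e, Yc e}, {Yb e, W1 e}, {Yb e, W2 e}, {W1 e, P1 e}, {W2 e, P2 e}}"
    proof -
      have "x \<in> {{Yb e, W1 e}, {Yb e, W2 e}} \<union> (\<lambda>w. {Zv w, Yc e}) ` e"
        using e(2) unfolding gad_def .
      then show ?thesis
      proof (elim UnE imageE)
        assume "x \<in> {{Yb e, W1 e}, {Yb e, W2 e}}"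
        then have "x = {Yb e, W1 e} \<or> x = {Yb e, W2 e}" by simp
        then show ?thesis by (elim disjE) simp_all
      next
        fix w assume "w \<in> e" "x = {Zv w, Yc e}" then show ?thesis by blast
      qed
    qed
    then have "x \<in> (\<Union>e\<in>E. {{Zv u, Yc e} | u. u \<in> e} \<union>
        {{Ya e, Yb e}, {Ya e, Yc e}, {Yb e, W1 e}, {Yb e, W2 e}, {W1 e, P1 e}, {W2 e, P2 e}})"
      using eE by (rule UN_I[rotated])
    then show "x \<in> E'" unfolding E'_def constr_E_def by (rule UnI2)
  qed
  have cF': "card F' \<le> 4 * l"
  proof -
    have "card F' \<le> (\<Sum>e\<in>F. card (gad e))" unfolding F'_def TT_def by (rule card_UN_le[OF fF])
    also have "\<dots> \<le> (\<Sum>e\<in>F. 4)"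
    proof (rule sum_mono)
      fix e assume "e \<in> F"
      then obtain u v where "e = {u,v}" using E2 FE by blast
      then have "gad e = {{Yb e, W1 e}, {Yb e, W2 e}, {Zv u, Yc e}, {Zv v, Yc e}}"
        by (auto simp: gad_def)
      then show "card (gad e) \<le> 4" by (simp add: card_insert_le_m1)
    qed
    finally show ?thesis using F by simp
  qed
  have cnt: "card (ccomp F' ` D) + 4 * l \<le> card D"
  proof -
    have inD: "Yb e \<in> D \<and> W1 e \<in> D \<and> W2 e \<in> D \<and> Yc e \<in> D \<and> (\<forall>w\<in>e. Zv w \<in> D)"
      if eF: "e \<in> F" for e
    proof -
      have eE: "e \<in> E" using FE eF by (rule subsetD)
      have "Yb e \<in> D" "Yc e \<in> D" using eF unfolding D_def by blast+
      moreover have "W1 e \<in> D" "W2 e \<in> D" using eE unfolding D_def A_def by blast+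
      moreover have "Zv w \<in> D" if "w \<in> e" for w
        using EV[OF eE that] unfolding D_def A_def by blast
      ultimately show ?thesis by blast
    qed
    have "card (ccomp (TT F) ` D) + 4 * card F \<le> card D"
      by (rule count_all[OF E2 FE fF _ fD]) (erule (4) noc, erule inD)
    then show ?thesis unfolding F'_def using F(2) by simp
  qed
  have vc1: "vc (contract_V V' F') (contract_E E' F') \<le> card (ccomp F' ` D)"
  proof (rule vc_le)
    show "finite (contract_V V' F')" using fV' by (simp add: contract_V_def)
    show "vertex_cover (contract_V V' F') (contract_E E' F') (ccomp F' ` D)"
      unfolding vertex_cover_def
    proof (intro conjI ballI)
      show "ccomp F' ` D \<subseteq> contract_V V' F'" using DV' by (auto simp: contract_V_def)
      fix c assume "c \<in> contract_E E' F'"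
      then obtain x y where xy: "c = {ccomp F' x, ccomp F' y}" "{x,y} \<in> E'"
        by (auto simp: contract_E_def)
      then have "x \<in> D \<or> y \<in> D" using coverD by (auto simp: vertex_cover_def)
      then show "c \<inter> ccomp F' ` D \<noteq> {}" using xy by auto
    qed
  qed
  have vc2: "card C0 \<le> vc V' E'"
  proof (rule vc_ge[OF fV' coverD])
    fix C assume C: "vertex_cover V' E' C"
    have fC: "finite C" using C fV' finite_subset by (auto simp: vertex_cover_def)
    define f where "f n = (case n of
        Zv w \<Rightarrow> (if Zv w \<in> C then Zv w else Pv w)
      | Ya e \<Rightarrow> (if Ya e \<in> C then Ya e else Yc e)
      | W1 e \<Rightarrow> (if W1 e \<in> C then W1 e else P1 e)
      | W2 e \<Rightarrow> (if W2 e \<in> C then W2 e else P2 e)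
      | m \<Rightarrow> m)" for n
    define g :: "'a node \<Rightarrow> 'a node" where "g n = (case n of
        Pv w \<Rightarrow> Zv w | Yc e \<Rightarrow> Ya e | P1 e \<Rightarrow> W1 e | P2 e \<Rightarrow> W2 e | m \<Rightarrow> m)" for n
    have gf: "g (f x) = x" if "x \<in> C0" for x
    proof -
      have "(\<exists>w. x = Zv w) \<or> (\<exists>e. x = Ya e) \<or> (\<exists>e. x = W1 e) \<or> (\<exists>e. x = W2 e)"
        using that unfolding C0_def A_def by blast
      then show ?thesis by (elim disjE exE) (simp_all add: f_def g_def)
    qed
    have "inj_on f C0" by (rule inj_on_inverseI[of _ g]) (rule gf)
    moreover have "f ` C0 \<subseteq> C"
    proof
      fix y assume "y \<in> f ` C0"
      then obtain x where x: "x \<in> C0" "y = f x" by blast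
      have cov: "\<And>a b. {a,b} \<in> E' \<Longrightarrow> a \<in> C \<or> b \<in> C"
        using C by (auto simp: vertex_cover_def)
      have "x \<in> Zv ` V \<or> x \<in> W1 ` E \<or> x \<in> W2 ` E \<or> x \<in> Ya ` E"
        using x(1) FE unfolding C0_def A_def by blast
      then show "y \<in> C"
      proof (elim disjE imageE)
        fix w assume "w \<in> V" "x = Zv w"
        moreover have "{Zv w, Pv w} \<in> E'" using \<open>w \<in> V\<close> by (auto simp: E'_def constr_E_def)
        ultimately show ?thesis using x cov by (auto simp: f_def)
      next
        fix e assume "e \<in> E" "x = W1 e"
        moreover have "{W1 e, P1 e} \<in> E'" using \<open>e \<in> E\<close> by (auto simp: E'_def constr_E_def)
        ultimately show ?thesis using x cov by (auto simp: f_def)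
      next
        fix e assume "e \<in> E" "x = W2 e"
        moreover have "{W2 e, P2 e} \<in> E'" using \<open>e \<in> E\<close> by (auto simp: E'_def constr_E_def)
        ultimately show ?thesis using x cov by (auto simp: f_def)
      next
        fix e assume "e \<in> E" "x = Ya e"
        moreover have "{Ya e, Yc e} \<in> E'" using \<open>e \<in> E\<close> by (auto simp: E'_def constr_E_def)
        ultimately show ?thesis using x cov by (auto simp: f_def)
      qed
    qed
    ultimately show "card C0 \<le> card C" using fC by (rule card_inj_on_le)
  qed
  show ?thesis
    unfolding contraction_vc_def
  proof (intro exI[of _ F'] conjI)
    show "F' \<subseteq> constr_E V E" using F'E' by (simp add: E'_def)
    show "card F' \<le> 4 * l" by (rule cF')
    have "int (vc (contract_V V' F') (contract_E E' F')) \<le> int (vc V' E') - int (3 * l)"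
      using vc1 vc2 cnt cD cC0 by linarith
    then show "int (vc (contract_V (constr_V V E) F') (contract_E (constr_E V E) F'))
        \<le> int (vc (constr_V V E) (constr_E V E)) - int (3 * l)" by (simp add: V'_def E'_def)
  qed
qed

end
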